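(* Let $f$ be a positive definite function and let $W=\{w_1,\dots,w_N\}\subset V$ be a norming set for $\mathcal{B}_M$. Then for every signal $x\in\mathcal{L}(G)$ its GBF interpolant $\mathrm{I}_W x$ satisfies $$\max_{v\in V}|x(v)-\mathrm{I}_W x(v)|\le\big(1+\|(\mathbf{S}_W\mathbf{B}_M)^{-1}\|\big)\Big(\sum_{k=M+1}^n\hat{f}_k\Big)^{1/2}\|x\|_{K_f}.$$
   Context: Let $G$ be a graph with vertex set $V=\{v_1,\dots,v_n\}$, symmetric non-negative weighted adjacency matrix $\mathbf{A}$, degree matrix $\mathbf{D}=\mathrm{diag}(\sum_k\mathbf{A}_{ik})$ (positive), and normalized Laplacian $\mathbf{L}=\mathbf{I}_n-\mathbf{D}^{-1/2}\mathbf{A}\mathbf{D}^{-1/2}$. Signals are vectors in $\mathcal{L}(G)\cong\mathbb{R}^n$ with euclidean norm and standard basis $e_1,\dots,e_n$. Fix an orthonormal eigendecomposition $\mathbf{L}=\mathbf{U}\,\mathrm{diag}(\lambda_1,\dots,\lambda_n)\mathbf{U}^\intercal$, $\lambda_1\le\dots\le\lambda_n$, with columns $u_1,\dots,u_n$. Fourier transform $\hat{x}=\mathbf{U}^\intercal x$; convolution operator $\mathbf{C}_x=\mathbf{U}\,\mathrm{diag}(\hat{x})\mathbf{U}^\intercal$. For $f\in\mathcal{L}(G)$ let $(\mathbf{K}_f)_{ij}=(\mathbf{C}_{e_j}f)(v_i)$; $f$ is a positive definite function if $\mathbf{K}_f$ is symmetric strictly positive definite; then $\|x\|_{K_f}=\sqrt{x^\intercal\mathbf{K}_f^{-1}x}$.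 For distinct nodes $w_k=v_{j_k}$, $k=1,\dots,N$, let $\mathbf{K}_{f,W}\in\mathbb{R}^{N\times N}$ have entries $(\mathbf{K}_{f,W})_{kl}=(\mathbf{C}_{e_{j_l}}f)(w_k)$ (invertible); the GBF interpolant is $\mathrm{I}_W x=\sum_{k=1}^N c_k\mathbf{C}_{e_{j_k}}f$ where $c$ solves $\mathbf{K}_{f,W}c=(x(w_1),\dots,x(w_N))^\intercal$. Let $\mathcal{B}_M=\mathrm{span}\{u_1,\dots,u_M\}$, $\mathbf{S}_W x(v)=x(v)$ for $v\in W$ and $0$ otherwise, $\mathbf{B}_M x=\sum_{k=1}^M(u_k^\intercal x)u_k$. $W$ is a norming set for $\mathcal{B}_M$ if $\mathbf{S}_W\mathbf{B}_M$ is injective on $\mathcal{B}_M$; $\|(\mathbf{S}_W\mathbf{B}_M)^{-1}\|$ is the operator norm of the inverse of $\mathbf{S}_W\mathbf{B}_M|_{\mathcal{B}_M}$ on its image $\mathbf{S}_W(\mathcal{B}_M)$ with respect to the euclidean norm. *)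

theory Defs
  imports "HOL-Analysis.Analysis"
begin

text \<open>Vertices of the graph are the elements of a finite type 'n; n = CARD('n).  Eigenvectors/eigenvalues are indexed by
  k < CARD('n) (0-based, i.e. k corresponds to u_(k+1) of the paper).\<close>

definition degree :: "real^'n^'n \<Rightarrow> 'n::finite \<Rightarrow> real" where
  "degree A i = (\<Sum>k\<in>UNIV. A $ i $ k)"

definition norm_laplacian :: "real^'n^'n \<Rightarrow> real^'n::finite^'n" where
  "norm_laplacian A = (\<chi> i j. (if i = j then 1 else 0)
        - A $ i $ j / (sqrt (degree A i) * sqrt (degree A j)))"

definition graph_eigensystem ::
    "real^'n^'n \<Rightarrow> (nat \<Rightarrow> real^'n::finite) \<Rightarrow> (nat \<Rightarrow> real) \<Rightarrow> bool" where
  "graph_eigensystem A u lam \<longleftrightarrow>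
     transpose A = A \<and> (\<forall>i j. 0 \<le> A $ i $ j) \<and> (\<forall>i. 0 < degree A i) \<and>
     (\<forall>k<CARD('n). \<forall>l<CARD('n). u k \<bullet> u l = (if k = l then 1 else 0)) \<and>
     (\<forall>k<CARD('n). norm_laplacian A *v u k = lam k *\<^sub>R u k) \<and>
     (\<forall>k l. k \<le> l \<longrightarrow> l < CARD('n) \<longrightarrow> lam k \<le> lam l)"

definition gft :: "(nat \<Rightarrow> real^'n::finite) \<Rightarrow> real^'n \<Rightarrow> nat \<Rightarrow> real" where
  "gft u x k = u k \<bullet> x"

definition conv :: "(nat \<Rightarrow> real^'n::finite) \<Rightarrow> real^'n \<Rightarrow> real^'n \<Rightarrow> real^'n" where
  "conv u x y = (\<Sum>k<CARD('n). (gft u x k * gft u y k) *\<^sub>R u k)"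

definition kernel_mat :: "(nat \<Rightarrow> real^'n::finite) \<Rightarrow> real^'n \<Rightarrow> real^'n^'n" where
  "kernel_mat u f = (\<chi> i j. conv u (axis j 1) f $ i)"

definition pos_def_fun :: "(nat \<Rightarrow> real^'n::finite) \<Rightarrow> real^'n \<Rightarrow> bool" where
  "pos_def_fun u f \<longleftrightarrow> transpose (kernel_mat u f) = kernel_mat u f \<and>
     (\<forall>x. x \<noteq> 0 \<longrightarrow> 0 < x \<bullet> (kernel_mat u f *v x))"

definition native_norm :: "(nat \<Rightarrow> real^'n::finite) \<Rightarrow> real^'n \<Rightarrow> real^'n \<Rightarrow> real" where
  "native_norm u f x = sqrt (x \<bullet> (matrix_inv (kernel_mat u f) *v x))"

text \<open>GBF interpolation: coefficients c (indexed by the nodes of W, zero outside W)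
  solving K_(f,W) c = x|_W, and the interpolant  sum_(w in W) c_w C_(e_w) f.\<close>
definition gbf_coeffs ::
    "(nat \<Rightarrow> real^'n::finite) \<Rightarrow> real^'n \<Rightarrow> 'n set \<Rightarrow> real^'n \<Rightarrow> 'n \<Rightarrow> real" where
  "gbf_coeffs u f W x = (THE c. (\<forall>v. v \<notin> W \<longrightarrow> c v = 0) \<and>
      (\<forall>w'\<in>W. (\<Sum>w\<in>W. c w * conv u (axis w 1) f $ w') = x $ w'))"

definition gbf_interp ::
    "(nat \<Rightarrow> real^'n::finite) \<Rightarrow> real^'n \<Rightarrow> 'n set \<Rightarrow> real^'n \<Rightarrow> real^'n" where
  "gbf_interp u f W x = (\<Sum>w\<in>W. gbf_coeffs u f W x w *\<^sub>R conv u (axis w 1) f)"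

definition bl_space :: "(nat \<Rightarrow> real^'n::finite) \<Rightarrow> nat \<Rightarrow> (real^'n) set" where
  "bl_space u M = span (u ` {..<M})"

definition bl_proj :: "(nat \<Rightarrow> real^'n::finite) \<Rightarrow> nat \<Rightarrow> real^'n \<Rightarrow> real^'n" where
  "bl_proj u M x = (\<Sum>k<M. (u k \<bullet> x) *\<^sub>R u k)"

definition sampling :: "'n::finite set \<Rightarrow> real^'n \<Rightarrow> real^'n" where
  "sampling W x = (\<chi> v. if v \<in> W then x $ v else 0)"

definition norming_set :: "(nat \<Rightarrow> real^'n::finite) \<Rightarrow> nat \<Rightarrow> 'n set \<Rightarrow> bool" where
  "norming_set u M W \<longleftrightarrow> inj_on (sampling W \<circ> bl_proj u M) (bl_space u M)"

text \<open>Operator norm of the inverse of S_W B_M restricted to B_M, on its image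
  S_W(B_M), w.r.t. the euclidean norm: sup of ||T^(-1) y|| over ||y|| <= 1.\<close>
definition norming_inv_norm :: "(nat \<Rightarrow> real^'n::finite) \<Rightarrow> nat \<Rightarrow> 'n set \<Rightarrow> real" where
  "norming_inv_norm u M W =
     Sup {norm (inv_into (bl_space u M) (sampling W \<circ> bl_proj u M) y) | y.
            y \<in> (sampling W \<circ> bl_proj u M) ` bl_space u M \<and> norm y \<le> 1}"

end

theory Submission
  imports Defs
begin


context
  fixes u :: "nat \<Rightarrow> real^'n::finite"
  assumes ON: "\<forall>k<CARD('n). \<forall>l<CARD('n). u k \<bullet> u l = (if k = l then 1 else 0)"
begin

lemma on_sum: "j < CARD('n) \<Longrightarrow> m \<le> CARD('n) \<Longrightarrow>
   u j \<bullet> (\<Sum>k<m. a k *\<^sub>R u k) = (if j < m then a j else 0)"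
proof -
  assume j: "j < CARD('n)" and m: "m \<le> CARD('n)"
  have "u j \<bullet> (\<Sum>k<m. a k *\<^sub>R u k) = (\<Sum>k<m. a k * (if j = k then 1 else 0))"
    unfolding inner_sum_right inner_scaleR_right
    by (rule sum.cong) (use j m ON in auto)
  also have "\<dots> = (if j < m then a j else 0)"
    by (simp add: if_distrib[of "\<lambda>t. _ * t"] sum.delta eq_commute[of j] cong: if_cong)
  finally show ?thesis .
qed

lemma on_sumS: "j < CARD('n) \<Longrightarrow> S \<subseteq> {..<CARD('n)} \<Longrightarrow>
   u j \<bullet> (\<Sum>k\<in>S. a k *\<^sub>R u k) = (if j \<in> S then a j else 0)"
proof -
  assume j: "j < CARD('n)" and m: "S \<subseteq> {..<CARD('n)}"
  have fin: "finite S" using m finite_subset by blast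
  have "u j \<bullet> (\<Sum>k\<in>S. a k *\<^sub>R u k) = (\<Sum>k\<in>S. a k * (if j = k then 1 else 0))"
    unfolding inner_sum_right inner_scaleR_right
    by (rule sum.cong) (use j m ON in auto)
  also have "\<dots> = (if j \<in> S then a j else 0)"
    using fin by (simp add: if_distrib[of "\<lambda>t. _ * t"] sum.delta eq_commute[of j] cong: if_cong)
  finally show ?thesis .
qed

lemma expand_partial:
  assumes m: "m \<le> CARD('n)" and y: "y \<in> span (u ` {..<m})"
  shows "y = (\<Sum>k<m. (u k \<bullet> y) *\<^sub>R u k)"
proof -
  define r where "r = y - (\<Sum>k<m. (u k \<bullet> y) *\<^sub>R u k)"
  have rs: "r \<in> span (u ` {..<m})" unfolding r_def
    by (intro span_diff y span_sum span_scale span_base) auto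
  have "orthogonal r z" if zm: "z \<in> u ` {..<m}" for z
  proof -
    obtain j where j: "j < m" "z = u j" using zm by auto
    have "u j \<bullet> r = 0" unfolding r_def inner_diff_right
      using on_sum[of j m "\<lambda>k. u k \<bullet> y"] j m by auto
    then show ?thesis using j by (simp add: orthogonal_def inner_commute)
  qed
  then have "orthogonal r r" using orthogonal_to_span[OF rs] by blast
  then have "r = 0" by (simp add: orthogonal_def)
  then show ?thesis unfolding r_def by simp
qed

lemma span_all: "span (u ` {..<CARD('n)}) = UNIV"
proof -
  have inj: "inj_on u {..<CARD('n)}"
  proof (rule inj_onI)
    fix k l assume k: "k \<in> {..<CARD('n)}" and l: "l \<in> {..<CARD('n)}" and e: "u k = u l"
    show "k = l"
    proof (rule ccontr)
      assume "k \<noteq> l"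
      then have "u k \<bullet> u l = 0" using ON k l by auto
      moreover have "u k \<bullet> u k = 1" using ON k by auto
      ultimately show False using e by simp
    qed
  qed
  have po: "pairwise orthogonal (u ` {..<CARD('n)})"
    unfolding pairwise_def orthogonal_def using ON by auto
  have nz: "0 \<notin> u ` {..<CARD('n)}"
  proof
    assume "0 \<in> u ` {..<CARD('n)}"
    then obtain k where "k < CARD('n)" "u k = 0" by auto
    with ON show False by force
  qed
  have ind: "independent (u ` {..<CARD('n)})"
    by (rule pairwise_orthogonal_independent[OF po nz])
  have "card (u ` {..<CARD('n)}) = CARD('n)" using card_image[OF inj] by simp
  then have "UNIV \<subseteq> span (u ` {..<CARD('n)})"
    using card_ge_dim_independent[of "u ` {..<CARD('n)}" UNIV] ind by simp
  then show ?thesis by auto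
qed

lemma expand: "y = (\<Sum>k<CARD('n). (u k \<bullet> y) *\<^sub>R u k)"
  using expand_partial[of "CARD('n)" y] span_all by auto

lemma parseval: "p \<bullet> q = (\<Sum>k<CARD('n). (u k \<bullet> p) * (u k \<bullet> q))"
proof -
  have "p \<bullet> q = (\<Sum>k<CARD('n). (u k \<bullet> p) *\<^sub>R u k) \<bullet> q" using expand[of p] by simp
  also have "\<dots> = (\<Sum>k<CARD('n). (u k \<bullet> p) * (u k \<bullet> q))"
    unfolding inner_sum_left inner_scaleR_left by (rule sum.cong) (simp_all add: inner_commute)
  finally show ?thesis .
qed

end


lemma kernel_mult: fixes u :: "nat \<Rightarrow> real^'n::finite" shows "kernel_mat u f *v y = (\<Sum>k<CARD('n::finite). ((u k \<bullet> f) * (u k \<bullet> y)) *\<^sub>R u k)"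
unfolding vec_eq_iff proof (intro allI)
  fix i :: 'n
  have "(kernel_mat u f *v y) $ i = (\<Sum>j\<in>UNIV. (\<Sum>k<CARD('n). (u k $ j * (u k \<bullet> f)) * u k $ i) * y $ j)"
    by (simp add: matrix_vector_mult_def kernel_mat_def conv_def gft_def sum_component inner_axis)
  also have "\<dots> = (\<Sum>k<CARD('n). (\<Sum>j\<in>UNIV. (u k \<bullet> f) * u k $ i * (u k $ j * y $ j)))"
    by (subst sum.swap) (simp add: sum_distrib_left sum_distrib_right mult_ac)
  also have "\<dots> = (\<Sum>k<CARD('n). ((u k \<bullet> f) * (u k \<bullet> y)) * u k $ i)"
    by (simp add: inner_vec_def sum_distrib_left mult_ac)
  also have "\<dots> = (\<Sum>k<CARD('n). ((u k \<bullet> f) * (u k \<bullet> y)) *\<^sub>R u k) $ i"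
    by (simp add: sum_component)
  finally show "(kernel_mat u f *v y) $ i = (\<Sum>k<CARD('n). ((u k \<bullet> f) * (u k \<bullet> y)) *\<^sub>R u k) $ i" .
qed



context
  fixes u :: "nat \<Rightarrow> real^'n::finite" and f :: "real^'n"
  assumes ON: "\<forall>k<CARD('n). \<forall>l<CARD('n). u k \<bullet> u l = (if k = l then 1 else 0)"
    and PD: "\<forall>x. x \<noteq> 0 \<longrightarrow> 0 < x \<bullet> (kernel_mat u f *v x)"
begin

lemma uK: "j < CARD('n) \<Longrightarrow> u j \<bullet> (kernel_mat u f *v y) = (u j \<bullet> f) * (u j \<bullet> y)"
  unfolding kernel_mult using on_sum[OF ON, of j "CARD('n)"] by simp

lemma fpos: "k < CARD('n) \<Longrightarrow> 0 < u k \<bullet> f"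
proof -
  assume k: "k < CARD('n)"
  have "u k \<bullet> u k = 1" using ON k by auto
  then have "u k \<noteq> 0" by auto
  then have "0 < u k \<bullet> (kernel_mat u f *v u k)" using PD by auto
  also have "\<dots> = u k \<bullet> f" using uK[OF k] \<open>u k \<bullet> u k = 1\<close> by simp
  finally show ?thesis .
qed

lemma Kinj: "inj ((*v) (kernel_mat u f))"
proof (rule injI)
  fix a b assume "kernel_mat u f *v a = kernel_mat u f *v b"
  then have "kernel_mat u f *v (a - b) = 0" by (simp add: matrix_vector_mult_diff_distrib)
  then have "(a - b) \<bullet> (kernel_mat u f *v (a - b)) = 0" by simp
  then show "a = b" using PD[rule_format, of "a - b"] by auto
qed

lemma invK: "matrix_inv (kernel_mat u f) *v (kernel_mat u f *v g) = g"
proof -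
  obtain B where "B ** kernel_mat u f = mat 1"
    using Kinj matrix_left_invertible_injective by blast
  then have "invertible (kernel_mat u f)" using invertible_left_inverse by blast
  then have "\<exists>A'. kernel_mat u f ** A' = mat 1 \<and> A' ** kernel_mat u f = mat 1"
    unfolding invertible_def by blast
  then have "matrix_inv (kernel_mat u f) ** kernel_mat u f = mat 1"
    unfolding matrix_inv_def by (rule someI2_ex) blast
  then show ?thesis by (simp add: matrix_vector_mul_assoc)
qed

lemma Qform: "y \<bullet> (matrix_inv (kernel_mat u f) *v y) = (\<Sum>k<CARD('n). (u k \<bullet> y)^2 / (u k \<bullet> f))"
proof -
  define g where "g = (\<Sum>k<CARD('n). ((u k \<bullet> y) / (u k \<bullet> f)) *\<^sub>R u k)"
  have ug: "u k \<bullet> g = (u k \<bullet> y) / (u k \<bullet> f)" if "k < CARD('n)" for k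
    unfolding g_def using on_sum[OF ON that, of "CARD('n)"] that by simp
  have "kernel_mat u f *v g = (\<Sum>k<CARD('n). ((u k \<bullet> f) * (u k \<bullet> g)) *\<^sub>R u k)"
    by (rule kernel_mult)
  also have "\<dots> = (\<Sum>k<CARD('n). (u k \<bullet> y) *\<^sub>R u k)"
  proof (rule sum.cong)
    fix k assume "k \<in> {..<CARD('n)}"
    then have k: "k < CARD('n)" by simp
    have "u k \<bullet> f \<noteq> 0" using fpos[OF k] by simp
    then show "((u k \<bullet> f) * (u k \<bullet> g)) *\<^sub>R u k = (u k \<bullet> y) *\<^sub>R u k"
      using ug[OF k] by simp
  qed simp
  also have "\<dots> = y" using expand[OF ON, of y] by (rule sym)
  finally have "kernel_mat u f *v g = y" .
  then have "matrix_inv (kernel_mat u f) *v y = g" using invK[of g] by simp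
  then have "y \<bullet> (matrix_inv (kernel_mat u f) *v y) = (\<Sum>k<CARD('n). (u k \<bullet> y) * (u k \<bullet> g))"
    using parseval[OF ON, of y g] by simp
  also have "\<dots> = (\<Sum>k<CARD('n). (u k \<bullet> y)^2 / (u k \<bullet> f))"
    by (rule sum.cong) (auto simp: ug power2_eq_square)
  finally show ?thesis .
qed

lemma supp_zero:
  assumes d0: "\<forall>v. v \<notin> W \<longrightarrow> d $ v = 0" and dK: "\<forall>w\<in>W. (kernel_mat u f *v d) $ w = 0"
  shows "d = 0"
proof -
  have "d \<bullet> (kernel_mat u f *v d) = (\<Sum>i\<in>UNIV. d $ i * (kernel_mat u f *v d) $ i)"
    by (simp add: inner_vec_def)
  also have "\<dots> = 0" by (rule sum.neutral) (use d0 dK in auto)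
  finally show ?thesis using PD[rule_format, of d] by auto
qed

lemma Kv_W:
  assumes d0: "\<forall>v. v \<notin> W \<longrightarrow> d $ v = 0"
  shows "(kernel_mat u f *v d) $ i = (\<Sum>w\<in>W. d $ w * conv u (axis w 1) f $ i)"
proof -
  have "(kernel_mat u f *v d) $ i = (\<Sum>w\<in>UNIV. d $ w * conv u (axis w 1) f $ i)"
    by (simp add: matrix_vector_mult_def kernel_mat_def mult.commute)
  also have "\<dots> = (\<Sum>w\<in>W. d $ w * conv u (axis w 1) f $ i)"
    by (rule sum.mono_neutral_right) (use d0 in auto)
  finally show ?thesis .
qed

lemma coeffs_exist:
  "\<exists>c. (\<forall>v. v \<notin> W \<longrightarrow> c $ v = 0) \<and> (\<forall>w\<in>W. (kernel_mat u f *v c) $ w = x $ w)"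
proof -
  define Mt :: "real^'n^'n" where
    "Mt = (\<chi> i j. if i \<in> W then (if j \<in> W then kernel_mat u f $ i $ j else 0) else (if i = j then 1 else 0))"
  define S where "S d = (\<chi> v. if v \<in> W then d $ v else (0::real))" for d :: "real^'n"
  have MtS: "(Mt *v d) $ i = (if i \<in> W then (kernel_mat u f *v S d) $ i else d $ i)" for d i
  proof (cases "i \<in> W")
    case True
    have "(Mt *v d) $ i = (\<Sum>j\<in>UNIV. (if j \<in> W then kernel_mat u f $ i $ j else 0) * d $ j)"
      using True by (simp add: Mt_def matrix_vector_mult_def)
    also have "\<dots> = (kernel_mat u f *v S d) $ i"
      by (simp add: matrix_vector_mult_def S_def if_distrib cong: if_cong)
         (rule sum.cong, auto)
    finally show ?thesis using True by simp
  next
    case False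
    have "(Mt *v d) $ i = (\<Sum>j\<in>UNIV. (if i = j then d $ j else 0))"
      unfolding Mt_def matrix_vector_mult_def vec_lambda_beta using False by (intro sum.cong) auto
    also have "\<dots> = d $ i" by simp
    finally show ?thesis using False by simp
  qed
  have "inj ((*v) Mt)"
  proof (rule injI)
    fix a b assume ab: "Mt *v a = Mt *v b"
    define d where "d = a - b"
    have Md: "Mt *v d = 0" unfolding d_def using ab by (simp add: matrix_vector_mult_diff_distrib)
    have d0: "\<forall>v. v \<notin> W \<longrightarrow> d $ v = 0"
    proof (intro allI impI)
      fix v assume "v \<notin> W" then show "d $ v = 0" using MtS[of d v] Md by simp
    qed
    have Sd: "S d = d" using d0 unfolding S_def vec_eq_iff by auto
    have "\<forall>w\<in>W. (kernel_mat u f *v d) $ w = 0"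
    proof
      fix w assume w: "w \<in> W"
      have "(Mt *v d) $ w = 0" using Md by simp
      then show "(kernel_mat u f *v d) $ w = 0" using MtS[of d w] w Sd by simp
    qed
    then have "d = 0" using supp_zero d0 by blast
    then show "a = b" unfolding d_def by simp
  qed
  then obtain B where "B ** Mt = mat 1" using matrix_left_invertible_injective by blast
  then have "Mt ** B = mat 1" using matrix_left_right_inverse by blast
  then have "Mt *v (B *v S x) = S x" by (simp add: matrix_vector_mul_assoc)
  then obtain c where c: "Mt *v c = S x" by blast
  have c0: "\<forall>v. v \<notin> W \<longrightarrow> c $ v = 0"
  proof (intro allI impI)
    fix v assume "v \<notin> W" then show "c $ v = 0" using MtS[of c v] c by (simp add: S_def)
  qed
  have Sc: "S c = c" using c0 unfolding S_def vec_eq_iff by auto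
  have "\<forall>w\<in>W. (kernel_mat u f *v c) $ w = x $ w"
  proof
    fix w assume w: "w \<in> W"
    have "(Mt *v c) $ w = x $ w" using c w by (simp add: S_def)
    then show "(kernel_mat u f *v c) $ w = x $ w" using MtS[of c w] w Sc by simp
  qed
  then show ?thesis using c0 by blast
qed

end


lemma linear_sampling: "linear (sampling W)"
  by (rule linearI) (auto simp: sampling_def vec_eq_iff)

lemma linear_bl_proj: "linear (bl_proj u M)"
  by (rule linearI) (auto simp: bl_proj_def inner_add_right scaleR_add_left sum.distrib
      scaleR_sum_right inner_scaleR_right)

context
  fixes u :: "nat \<Rightarrow> real^'n::finite"
  assumes ON: "\<forall>k<CARD('n). \<forall>l<CARD('n). u k \<bullet> u l = (if k = l then 1 else 0)"
begin

lemma norming_bound: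
  assumes NS: "norming_set u M W" and M: "M \<le> CARD('n)"
  shows "0 \<le> norming_inv_norm u M W"
    and "\<And>p. p \<in> bl_space u M \<Longrightarrow> norm p \<le> norming_inv_norm u M W * norm (sampling W p)"
proof -
  define T where "T = sampling W \<circ> bl_proj u M"
  define B where "B = bl_space u M"
  have linT: "linear T" unfolding T_def
    by (rule linear_compose[OF linear_bl_proj linear_sampling])
  have injT: "inj_on T B" using NS unfolding norming_set_def T_def B_def .
  have subB: "subspace B" unfolding B_def bl_space_def by (rule subspace_span)
  have T0: "T 0 = 0" using linT by (rule linear_0)
  have B0: "0 \<in> B" using subB by (rule subspace_0)
  have Tp: "T p = sampling W p" if "p \<in> B" for p
  proof -
    have "bl_proj u M p = p" unfolding bl_proj_def
      using expand_partial[OF ON M, of p] that unfolding B_def bl_space_def by simp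
    then show ?thesis unfolding T_def by simp
  qed
  obtain e where e: "e > 0" "\<forall>x\<in>B. e * norm x \<le> norm (T x)"
  proof -
    have "\<exists>e>0. \<forall>x\<in>B. norm (T x) \<ge> e * norm x"
    proof (rule injective_imp_isometric)
      show "closed B" using subB by (rule closed_subspace)
      show "subspace B" by (rule subB)
      show "bounded_linear T" using linT by (rule linear_conv_bounded_linear[THEN iffD1])
      show "\<forall>x\<in>B. T x = 0 \<longrightarrow> x = 0" using injT T0 B0 by (metis inj_onD)
    qed
    then show ?thesis using that by blast
  qed
  define Sset where "Sset = {norm (inv_into B T y) | y. y \<in> T ` B \<and> norm y \<le> 1}"
  have C_def: "norming_inv_norm u M W = Sup Sset"
    unfolding norming_inv_norm_def Sset_def B_def T_def by simp
  have bdd: "bdd_above Sset"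
  proof (rule bdd_aboveI)
    fix t assume "t \<in> Sset"
    then obtain p where p: "p \<in> B" "norm (T p) \<le> 1" "t = norm (inv_into B T (T p))"
      unfolding Sset_def by auto
    have "t = norm p" using p injT by (simp add: inv_into_f_f)
    moreover have "e * norm p \<le> 1" using e p by force
    ultimately show "t \<le> 1 / e" using e by (simp add: field_simps)
  qed
  have "0 \<in> Sset" unfolding Sset_def
    using T0 B0 injT by (auto intro!: exI[of _ 0] image_eqI[of 0 T 0] simp: inv_into_f_f[OF injT B0, simplified T0])
  then have C0: "0 \<le> norming_inv_norm u M W" unfolding C_def using bdd by (rule cSup_upper)
  then show "0 \<le> norming_inv_norm u M W" .
  show "norm p \<le> norming_inv_norm u M W * norm (sampling W p)" if pB: "p \<in> bl_space u M" for p
  proof (cases "T p = 0")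
    case True
    then have "p = 0" using injT T0 B0 pB unfolding B_def by (metis inj_onD)
    then show ?thesis using C0 by simp
  next
    case False
    have pB': "p \<in> B" using pB unfolding B_def .
    define q where "q = p /\<^sub>R norm (T p)"
    have qB: "q \<in> B" unfolding q_def using subB pB' by (rule subspace_scale)
    have Tq: "T q = T p /\<^sub>R norm (T p)" unfolding q_def using linT by (rule linear_scale)
    have "norm (T q) = 1" using False Tq by simp
    then have "norm (inv_into B T (T q)) \<in> Sset" unfolding Sset_def using qB by auto
    then have "norm q \<le> norming_inv_norm u M W" unfolding C_def
      using inv_into_f_f[OF injT qB] bdd by (simp add: cSup_upper)
    then have "norm p / norm (T p) \<le> norming_inv_norm u M W" unfolding q_def by (simp add: divide_inverse mult.commute)
    then have "norm p \<le> norming_inv_norm u M W * norm (T p)"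
      using False by (simp add: field_simps)
    then show ?thesis using Tp[OF pB'] by simp
  qed
qed

end


theorem theorem7:
  fixes A :: "real^'n::finite^'n" and u :: "nat \<Rightarrow> real^'n" and lam :: "nat \<Rightarrow> real"
    and f x :: "real^'n" and W :: "'n set" and M :: nat
  assumes "graph_eigensystem A u lam"
    and "pos_def_fun u f"
    and "M \<le> CARD('n)"
    and "norming_set u M W"
  shows "(MAX v. \<bar>x $ v - gbf_interp u f W x $ v\<bar>)
           \<le> (1 + norming_inv_norm u M W) * sqrt (\<Sum>k\<in>{M..<CARD('n)}. gft u f k)
              * native_norm u f x"
proof -
  have ON: "\<forall>k<CARD('n). \<forall>l<CARD('n). u k \<bullet> u l = (if k = l then 1 else 0)"
    using assms(1) unfolding graph_eigensystem_def by blast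
  have PD: "\<forall>x. x \<noteq> 0 \<longrightarrow> 0 < x \<bullet> (kernel_mat u f *v x)"
    using assms(2) unfolding pos_def_fun_def by blast
  have Mn: "M \<le> CARD('n)" by fact
  define K where "K = kernel_mat u f"
  define C where "C = norming_inv_norm u M W"
  define S where "S = (\<Sum>k\<in>{M..<CARD('n)}. u k \<bullet> f)"
  define Q where "Q y = (\<Sum>k<CARD('n). (u k \<bullet> y)^2 / (u k \<bullet> f))" for y
  have fpos: "\<And>k. k < CARD('n) \<Longrightarrow> 0 < u k \<bullet> f" using fpos[OF ON PD] .
  obtain c where c0: "\<forall>v. v \<notin> W \<longrightarrow> c $ v = 0" and cK: "\<forall>w\<in>W. (K *v c) $ w = x $ w"
    using coeffs_exist[OF ON PD, of W x] unfolding K_def by blast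
  have coeffs: "gbf_coeffs u f W x = (\<lambda>v. c $ v)"
    unfolding gbf_coeffs_def
  proof (rule the_equality)
    show "(\<forall>v. v \<notin> W \<longrightarrow> c $ v = 0) \<and>
      (\<forall>w'\<in>W. (\<Sum>w\<in>W. c $ w * conv u (axis w 1) f $ w') = x $ w')"
      using c0 cK Kv_W[OF ON PD c0] unfolding K_def by simp
  next
    fix c' assume h: "(\<forall>v. v \<notin> W \<longrightarrow> c' v = 0) \<and>
      (\<forall>w'\<in>W. (\<Sum>w\<in>W. c' w * conv u (axis w 1) f $ w') = x $ w')"
    define d where "d = (\<chi> v. c' v) - c"
    have d0: "\<forall>v. v \<notin> W \<longrightarrow> d $ v = 0" using h c0 unfolding d_def by simp
    have c'0: "\<forall>v. v \<notin> W \<longrightarrow> (\<chi> v. c' v) $ v = 0" using h by simp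
    have "\<forall>w\<in>W. (K *v d) $ w = 0"
    proof
      fix w assume w: "w \<in> W"
      have "(K *v (\<chi> v. c' v)) $ w = x $ w"
        using Kv_W[OF ON PD c'0, of w] h w unfolding K_def by simp
      then show "(K *v d) $ w = 0" using cK w unfolding d_def
        by (simp add: matrix_vector_mult_diff_distrib)
    qed
    then have "d = 0" using supp_zero[OF ON PD d0] unfolding K_def by blast
    then show "c' = (\<lambda>v. c $ v)" unfolding d_def by (auto simp: vec_eq_iff)
  qed
  have interp: "gbf_interp u f W x = K *v c"
    unfolding vec_eq_iff
  proof
    fix i
    show "gbf_interp u f W x $ i = (K *v c) $ i"
      unfolding gbf_interp_def coeffs K_def Kv_W[OF ON PD c0] by (simp add: sum_component)
  qed
  define e where "e = x - K *v c"
  have eW: "\<And>w. w \<in> W \<Longrightarrow> e $ w = 0" unfolding e_def using cK by simp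
  define P where "P = bl_proj u M e"
  define r where "r = e - P"
  have PB: "P \<in> bl_space u M" unfolding P_def bl_proj_def bl_space_def
    by (intro span_sum span_scale span_base) auto
  have C0: "0 \<le> C" unfolding C_def using norming_bound(1)[OF ON assms(4) Mn] .
  have "norm P \<le> C * norm (sampling W P)" unfolding C_def
    using norming_bound(2)[OF ON assms(4) Mn PB] .
  also have "sampling W P = - sampling W r"
    unfolding vec_eq_iff sampling_def r_def using eW by auto
  also have "norm (- sampling W r) \<le> norm r"
    unfolding norm_minus_cancel by (rule norm_le_componentwise_cart) (simp add: sampling_def)
  finally have nP: "norm P \<le> C * norm r" using C0 by (simp add: mult_left_mono)
  
  have uP: "u k \<bullet> P = (if k < M then u k \<bullet> e else 0)" if "k < CARD('n)" for k
    unfolding P_def bl_proj_def using on_sum[OF ON that Mn] .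
  have S0: "0 \<le> S" unfolding S_def by (rule sum_nonneg) (use fpos in \<open>auto intro: less_imp_le\<close>)
  have "norm r ^ 2 = r \<bullet> r" by (simp add: power2_norm_eq_inner)
  also have "\<dots> = (\<Sum>k<CARD('n). (u k \<bullet> r)^2)" using parseval[OF ON, of r r]
    by (simp add: power2_eq_square)
  also have "\<dots> \<le> (\<Sum>k<CARD('n). S * ((u k \<bullet> e)^2 / (u k \<bullet> f)))"
  proof (rule sum_mono)
    fix k assume "k \<in> {..<CARD('n)}"
    then have k: "k < CARD('n)" by simp
    have fk: "0 < u k \<bullet> f" using fpos[OF k] .
    have t0: "0 \<le> (u k \<bullet> e)^2 / (u k \<bullet> f)" using fk by simp
    show "(u k \<bullet> r)^2 \<le> S * ((u k \<bullet> e)^2 / (u k \<bullet> f))"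
    proof (cases "k < M")
      case True
      then have "u k \<bullet> r = 0" unfolding r_def inner_diff_right using uP[OF k] by simp
      then show ?thesis using mult_nonneg_nonneg[OF S0 t0] by simp
    next
      case False
      then have ur: "u k \<bullet> r = u k \<bullet> e" unfolding r_def inner_diff_right using uP[OF k] by simp
      have fS: "u k \<bullet> f \<le> S" unfolding S_def
        by (rule member_le_sum) (use False k fpos in \<open>auto intro: less_imp_le\<close>)
      have "(u k \<bullet> r)^2 = (u k \<bullet> f) * ((u k \<bullet> e)^2 / (u k \<bullet> f))" using ur fk by simp
      also have "\<dots> \<le> S * ((u k \<bullet> e)^2 / (u k \<bullet> f))" using fS t0 by (rule mult_right_mono)
      finally show ?thesis .
    qed
  qed
  also have "\<dots> = S * Q e" unfolding Q_def by (simp add: sum_distrib_left)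
  finally have nr2: "norm r ^ 2 \<le> S * Q e" .
  
  have ec: "(\<Sum>k<CARD('n). (u k \<bullet> e) * (u k \<bullet> c)) = 0"
  proof -
    have "e \<bullet> c = (\<Sum>i\<in>UNIV. e $ i * c $ i)" unfolding inner_vec_def inner_real_def by (rule refl)
    also have "\<dots> = 0" by (rule sum.neutral) (use eW c0 in auto)
    finally show ?thesis using parseval[OF ON, of e c] by simp
  qed
  have QeQx: "Q e \<le> Q x"
  proof -
    have "Q e = (\<Sum>k<CARD('n). (u k \<bullet> e)^2 / (u k \<bullet> f) + 2 * ((u k \<bullet> e) * (u k \<bullet> c)))"
      unfolding Q_def sum.distrib using ec by (simp add: sum_distrib_left[symmetric])
    also have "\<dots> \<le> Q x" unfolding Q_def
    proof (rule sum_mono)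
      fix k assume "k \<in> {..<CARD('n)}"
      then have k: "k < CARD('n)" by simp
      have fk: "0 < u k \<bullet> f" using fpos[OF k] .
      have ux: "u k \<bullet> x = u k \<bullet> e + (u k \<bullet> f) * (u k \<bullet> c)"
        unfolding e_def inner_diff_right K_def uK[OF ON PD k] by simp
      define a where "a = u k \<bullet> e"
      define b where "b = u k \<bullet> c"
      define g where "g = u k \<bullet> f"
      have "(a + g * b)^2 / g = a^2 / g + 2 * (a * b) + g * b^2"
        using fk unfolding g_def[symmetric] by (simp add: field_simps power2_eq_square)
      moreover have "0 \<le> g * b^2" using fk unfolding g_def[symmetric] by simp
      ultimately have "a^2 / g + 2 * (a * b) \<le> (a + g * b)^2 / g" by linarith
      then show "(u k \<bullet> e)^2 / (u k \<bullet> f) + 2 * ((u k \<bullet> e) * (u k \<bullet> c)) \<le> (u k \<bullet> x)^2 / (u k \<bullet> f)"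
        unfolding ux a_def b_def g_def .
    qed
    finally show ?thesis .
  qed
  have nat: "native_norm u f x = sqrt (Q x)"
    unfolding native_norm_def Q_def using Qform[OF ON PD, of x] by simp
  have nr: "norm r \<le> sqrt S * sqrt (Q x)"
  proof -
    have "norm r = sqrt (norm r ^ 2)" by simp
    also have "\<dots> \<le> sqrt (S * Q e)" using nr2 by (rule real_sqrt_le_mono)
    also have "\<dots> \<le> sqrt (S * Q x)" using QeQx S0 by (simp add: mult_left_mono)
    also have "\<dots> = sqrt S * sqrt (Q x)" by (rule real_sqrt_mult)
    finally show ?thesis .
  qed
  have bound: "\<bar>x $ v - gbf_interp u f W x $ v\<bar> \<le> (1 + C) * sqrt S * sqrt (Q x)" for v
  proof -
    have "x $ v - gbf_interp u f W x $ v = e $ v" unfolding interp e_def by simp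
    also have "e $ v = P $ v + r $ v" unfolding r_def by simp
    finally have "\<bar>x $ v - gbf_interp u f W x $ v\<bar> \<le> \<bar>P $ v\<bar> + \<bar>r $ v\<bar>" by simp
    also have "\<dots> \<le> norm P + norm r" by (intro add_mono component_le_norm_cart)
    also have "\<dots> \<le> (1 + C) * norm r" using nP by (simp add: algebra_simps)
    also have "\<dots> \<le> (1 + C) * (sqrt S * sqrt (Q x))" using nr C0 by (intro mult_left_mono) auto
    finally show ?thesis by (simp add: mult_ac)
  qed
  show ?thesis
    unfolding nat C_def[symmetric] gft_def S_def[symmetric]
    by (rule Max.boundedI) (use bound in auto)
qed


end
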